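(* Let $a,b,c,d,e,f,g,h\ge0$ and $k,l>0$ be integers with $a+b+c+d>0$, $e+f>0$, $g+h>0$, and let $$E=\begin{bmatrix} J_{k,a}&J_{k,b}&-J_{k,c}&-J_{k,d}&J_{k,e}&-J_{k,f}&0&0\\ -J_{k,a}&-J_{k,b}&J_{k,c}&J_{k,d}&-J_{k,e}&J_{k,f}&0&0\\ J_{l,a}&-J_{l,b}&J_{l,c}&-J_{l,d}&0&0&J_{l,g}&-J_{l,h}\\ -J_{l,a}&J_{l,b}&-J_{l,c}&J_{l,d}&0&0&-J_{l,g}&J_{l,h} \end{bmatrix}$$ satisfy $E\mathbf 1=0$ and $\mathbf 1^TE=0^T$. Then $E$ is realizable if and only if $g-h$ and $e-f$ are even.
   Context: $J_{p,q}$ is the $p\times q$ all-ones matrix. Two $(0,1)$ matrices $A,B$ are Gram mates if $AA^T=BB^T$, $A^TA=B^TB$ and $A\neq B$. A $(0,1,-1)$ matrix $E$ with $E\mathbf 1=0$, $\mathbf 1^TE=0^T$ is realizable if there is a $(0,1)$ matrix $A$ such that $A$ and $A+E$ are Gram mates. *)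

theory Defs
  imports "Jordan_Normal_Form.Matrix"
begin

definition zero_one_mat :: "int mat \<Rightarrow> bool" where
  "zero_one_mat A \<longleftrightarrow> (\<forall>i<dim_row A. \<forall>j<dim_col A. A $$ (i,j) \<in> {0,1})"

definition gram_mates :: "int mat \<Rightarrow> int mat \<Rightarrow> bool" where
  "gram_mates A B \<longleftrightarrow> zero_one_mat A \<and> zero_one_mat B \<and>
     dim_row A = dim_row B \<and> dim_col A = dim_col B \<and>
     A * transpose_mat A = B * transpose_mat B \<and>
     transpose_mat A * A = transpose_mat B * B \<and> A \<noteq> B"

definition realizable :: "int mat \<Rightarrow> bool" where
  "realizable E \<longleftrightarrow> (\<exists>A. dim_row A = dim_row E \<and> dim_col A = dim_col E \<and>
     zero_one_mat A \<and> gram_mates A (A + E))"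

text \<open>Index of the block (w.r.t. consecutive block sizes) containing a position.\<close>
fun blk :: "nat list \<Rightarrow> nat \<Rightarrow> nat" where
  "blk [] i = 0"
| "blk (s # ss) i = (if i < s then 0 else Suc (blk ss (i - s)))"

text \<open>Sign pattern of the 4 x 8 block matrix; block (r,c) is sign * J.\<close>
definition sign_pattern :: "int list list" where
  "sign_pattern =
    [[ 1,  1, -1, -1,  1, -1,  0,  0],
     [-1, -1,  1,  1, -1,  1,  0,  0],
     [ 1, -1,  1, -1,  0,  0,  1, -1],
     [-1,  1, -1,  1,  0,  0, -1,  1]]"

definition E_mat :: "nat \<Rightarrow> nat \<Rightarrow> nat \<Rightarrow> nat \<Rightarrow> nat \<Rightarrow> nat \<Rightarrow> nat \<Rightarrow> nat \<Rightarrow> nat \<Rightarrow> nat \<Rightarrow> int mat" where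
  "E_mat k l a b c d e f g h =
     mat (k + k + l + l) (a + b + c + d + e + f + g + h)
       (\<lambda>(i,j). sign_pattern ! blk [k, k, l, l] i ! blk [a, b, c, d, e, f, g, h] j)"

end

theory Submission
  imports Defs
begin


lemma sum_lessThan_add: "(\<Sum>j<(x::nat)+y. F j) = (\<Sum>j<x. F j) + (\<Sum>j<y. F (x+j))"
  by (induction y arbitrary: F) (auto simp: add.assoc)

lemma gram_row:
  fixes A :: "int mat"
  assumes "dim_row A = n" "dim_col A = m" "i<n" "i'<n"
  shows "(A * transpose_mat A) $$ (i,i') = (\<Sum>j<m. A$$(i,j) * A$$(i',j))"
  using assms by (simp add: scalar_prod_def atLeast0LessThan)

lemma gram_col:
  fixes A :: "int mat"
  assumes "dim_row A = n" "dim_col A = m" "j<m" "j'<m"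
  shows "(transpose_mat A * A) $$ (j,j') = (\<Sum>i<n. A$$(i,j) * A$$(i,j'))"
  using assms by (simp add: scalar_prod_def atLeast0LessThan)

lemma blk_less: "i < sum_list ss \<Longrightarrow> blk ss i < length ss"
  by (induction ss arbitrary: i) auto

definition S :: "nat \<Rightarrow> nat \<Rightarrow> int" where "S r t = sign_pattern ! r ! t"

fun off :: "nat list \<Rightarrow> nat \<Rightarrow> nat" where
  "off [] i = i"
| "off (s # ss) i = (if i < s then i else off ss (i - s))"

definition sw :: "nat \<Rightarrow> nat" where
  "sw r = (if r = 0 then 1 else if r = 1 then 0 else if r = 2 then 3 else 2)"

definition Fv :: "nat list \<Rightarrow> nat \<Rightarrow> nat \<Rightarrow> nat \<Rightarrow> nat \<Rightarrow> nat \<Rightarrow> nat \<Rightarrow> int" where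
  "Fv C p q p' q' r j =
    (if S r (blk C j) = 1 then 0 else if S r (blk C j) = -1 then 1
     else if r < 2 then (if blk C j = 6 then of_bool (off C j < p) else of_bool (off C j < q))
     else (if blk C j = 4 then of_bool (off C j < p') else of_bool (off C j < q')))"

lemma Fv_swap:
  assumes "r < 4" "blk C j < 8"
  shows "Fv C p q p' q' r j + S r (blk C j) = Fv C p q p' q' (sw r) j"
proof -
  obtain t where t: "blk C j = t" "t < 8" using assms by auto
  have "r = 0 \<or> r = 1 \<or> r = 2 \<or> r = 3" using assms(1) by auto
  moreover have "t = 0 \<or> t = 1 \<or> t = 2 \<or> t = 3 \<or> t = 4 \<or> t = 5 \<or> t = 6 \<or> t = 7" using t by auto
  ultimately show ?thesis unfolding Fv_def sw_def S_def t(1)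
    by (elim disjE) (simp_all add: sign_pattern_def)
qed

lemma Fv_01: "Fv C p q p' q' r j \<in> {0,1}"
  unfolding Fv_def by auto

lemma ind_sum0: "(\<Sum>j<g. (of_bool (j < p) :: int)) = int (min p g)"
  by (induction g) auto

lemma ind_sum: "p \<le> g \<Longrightarrow> (\<Sum>j<g. (of_bool (j < p) :: int)) = int p"
  by (simp add: ind_sum0)

lemma card_ind: "p \<le> g \<Longrightarrow> card ({..<g} \<inter> {j. j < p}) = p"
proof -
  assume "p \<le> g"
  then have "{..<g} \<inter> {j. j < p} = {..<p}" by auto
  then show ?thesis by simp
qed

definition H :: "nat \<Rightarrow> nat \<Rightarrow> nat \<Rightarrow> nat \<Rightarrow> nat \<Rightarrow> nat \<Rightarrow> nat \<Rightarrow> nat \<Rightarrow> nat \<Rightarrow> nat \<Rightarrow> nat \<Rightarrow> nat \<Rightarrow> nat \<Rightarrow> nat \<Rightarrow> int" where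
  "H a b c d e f g h p q p' q' r r' = (\<Sum>j<a+b+c+d+e+f+g+h.
      Fv [a,b,c,d,e,f,g,h] p q p' q' r j * Fv [a,b,c,d,e,f,g,h] p q p' q' r' j)"

lemma H_sw:
  assumes "p \<le> g" "q \<le> h" "p' \<le> e" "q' \<le> f"
    and "int c + d + f = a + b + e" "int b + d + h = a + c + g"
    and "int d + q' + q = a + p' + p" "int c + q' + p = b + p' + q"
    and "r < 4" "r' < 4"
  shows "H a b c d e f g h p q p' q' (sw r) (sw r') = H a b c d e f g h p q p' q' r r'"
proof -
  have "r = 0 \<or> r = 1 \<or> r = 2 \<or> r = 3" using assms by auto
  moreover have "r' = 0 \<or> r' = 1 \<or> r' = 2 \<or> r' = 3" using assms by auto
  ultimately show ?thesis unfolding H_def Fv_def sw_def using assms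
    by (elim disjE; simp add: sum_lessThan_add S_def sign_pattern_def ind_sum card_ind; linarith?)
qed



definition pim :: "nat \<Rightarrow> nat \<Rightarrow> nat \<Rightarrow> nat" where
  "pim k l i = (if i < k then i + k else if i < k+k then i - k else if i < k+k+l then i + l else i - l)"

lemma pim_props:
  assumes "i < k+k+l+l"
  shows "pim k l i < k+k+l+l" "pim k l (pim k l i) = i"
    "blk [k,k,l,l] (pim k l i) = sw (blk [k,k,l,l] i)"
  using assms unfolding pim_def sw_def by auto

lemma E_idx:
  "i < k+k+l+l \<Longrightarrow> j < a+b+c+d+e+f+g+h \<Longrightarrow>
   E_mat k l a b c d e f g h $$ (i,j) = S (blk [k,k,l,l] i) (blk [a,b,c,d,e,f,g,h] j)"
  "dim_row (E_mat k l a b c d e f g h) = k+k+l+l"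
  "dim_col (E_mat k l a b c d e f g h) = a+b+c+d+e+f+g+h"
  unfolding E_mat_def S_def by auto

lemma suff:
  fixes a b c d e f g h k l :: nat
  assumes "k > 0" "l > 0" "a+b+c+d > 0"
    and rs1: "int a + b + e = c + d + f" and rs2: "int a + c + g = b + d + h"
    and ev1: "even (int g - int h)" and ev2: "even (int e - int f)"
  shows "realizable (E_mat k l a b c d e f g h)"
proof -
  define R where "R = [k,k,l,l]"
  define C where "C = [a,b,c,d,e,f,g,h]"
  define n where "n = k+k+l+l"
  define m where "m = a+b+c+d+e+f+g+h"
  define E where "E = E_mat k l a b c d e f g h"
  define p where "p = nat ((int g - int h) div 2)"
  define q where "q = nat ((int h - int g) div 2)"
  define p' where "p' = nat ((int e - int f) div 2)"
  define q' where "q' = nat ((int f - int e) div 2)"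
  have pq: "p \<le> g" "q \<le> h" "p' \<le> e" "q' \<le> f" unfolding p_def q_def p'_def q'_def by auto
  obtain t where t: "int g - int h = 2*t" using ev1 by (blast elim: evenE)
  obtain t' where t': "int e - int f = 2*t'" using ev2 by (blast elim: evenE)
  have t2: "int h - int g = 2*(-t)" "int f - int e = 2*(-t')" using t t' by simp_all
  have pq2: "2 * (int p - int q) = int g - int h" "2 * (int p' - int q') = int e - int f"
    unfolding p_def q_def p'_def q'_def t t' t2 by simp_all
  have Hc: "int c + d + f = a + b + e" "int b + d + h = a + c + g"
    "int d + q' + q = a + p' + p" "int c + q' + p = b + p' + q"
    using rs1 rs2 pq2 unfolding of_nat_add by (smt (verit))+
  define A where "A = mat n m (\<lambda>(i,j). Fv C p q p' q' (blk R i) j)"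
  have dimE: "dim_row E = n" "dim_col E = m" unfolding E_def n_def m_def by (simp_all add: E_idx)
  have Eij: "E $$ (i,j) = S (blk R i) (blk C j)" if "i < n" "j < m" for i j
    using that unfolding E_def n_def m_def R_def C_def by (simp add: E_idx)
  have dimA: "dim_row A = n" "dim_col A = m" unfolding A_def by simp_all
  have Aij: "A $$ (i,j) = Fv C p q p' q' (blk R i) j" if "i < n" "j < m" for i j
    using that unfolding A_def by simp
  have bR: "blk R i < 4" if "i < n" for i
    using blk_less[of i R] that unfolding R_def n_def by simp
  have bC: "blk C j < 8" if "j < m" for j
    using blk_less[of j C] that unfolding C_def m_def by simp
  have pimp: "pim k l i < n" "pim k l (pim k l i) = i" "blk R (pim k l i) = sw (blk R i)" if "i < n" for i
    using pim_props[of i k l] that unfolding n_def R_def by auto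
  have AE: "(A + E) $$ (i,j) = A $$ (pim k l i, j)" if "i < n" "j < m" for i j
  proof -
    have "(A + E) $$ (i,j) = Fv C p q p' q' (blk R i) j + S (blk R i) (blk C j)"
      using that dimE by (simp add: Aij Eij)
    also have "\<dots> = Fv C p q p' q' (sw (blk R i)) j"
      by (rule Fv_swap) (use bR bC that in auto)
    also have "\<dots> = A $$ (pim k l i, j)" using pimp that by (simp add: Aij)
    finally show ?thesis .
  qed
  have dimAE: "dim_row (A+E) = n" "dim_col (A+E) = m" using dimE by simp_all
  have zA: "zero_one_mat A" unfolding zero_one_mat_def using dimA Aij Fv_01 by simp
  have zAE: "zero_one_mat (A+E)" unfolding zero_one_mat_def using dimAE AE dimA Aij Fv_01 pimp by simp
  have Hrow: "(\<Sum>j<m. A$$(i,j) * A$$(i',j)) = H a b c d e f g h p q p' q' (blk R i) (blk R i')"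
    if "i < n" "i' < n" for i i'
    unfolding H_def using that by (simp add: Aij C_def m_def)
  have rowg: "A * transpose_mat A = (A+E) * transpose_mat (A+E)"
  proof (rule eq_matI)
    fix i i' assume ii: "i < dim_row ((A+E) * transpose_mat (A+E))" "i' < dim_col ((A+E) * transpose_mat (A+E))"
    then have ii': "i < n" "i' < n" using dimAE by auto
    have "((A+E) * transpose_mat (A+E)) $$ (i,i') = (\<Sum>j<m. (A+E)$$(i,j) * (A+E)$$(i',j))"
      by (rule gram_row) (use dimAE ii' in auto)
    also have "\<dots> = (\<Sum>j<m. A$$(pim k l i,j) * A$$(pim k l i',j))" using ii' by (simp add: AE)
    also have "\<dots> = H a b c d e f g h p q p' q' (sw (blk R i)) (sw (blk R i'))"
      using ii' pimp by (simp add: Hrow)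
    also have "\<dots> = H a b c d e f g h p q p' q' (blk R i) (blk R i')"
      by (rule H_sw) (use pq Hc bR ii' in auto)
    also have "\<dots> = (\<Sum>j<m. A$$(i,j) * A$$(i',j))" using ii' by (simp add: Hrow)
    also have "\<dots> = (A * transpose_mat A) $$ (i,i')"
      by (rule gram_row[symmetric]) (use dimA ii' in auto)
    finally show "(A * transpose_mat A) $$ (i,i') = ((A+E) * transpose_mat (A+E)) $$ (i,i')" by simp
  qed (use dimA dimAE in auto)
  have colg: "transpose_mat A * A = transpose_mat (A+E) * (A+E)"
  proof (rule eq_matI)
    fix j j' assume jj: "j < dim_row (transpose_mat (A+E) * (A+E))" "j' < dim_col (transpose_mat (A+E) * (A+E))"
    then have jj': "j < m" "j' < m" using dimAE by auto
    have "(transpose_mat (A+E) * (A+E)) $$ (j,j') = (\<Sum>i<n. (A+E)$$(i,j) * (A+E)$$(i,j'))"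
      by (rule gram_col) (use dimAE jj' in auto)
    also have "\<dots> = (\<Sum>i<n. A$$(pim k l i,j) * A$$(pim k l i,j'))" using jj' by (simp add: AE)
    also have "\<dots> = (\<Sum>i<n. A$$(i,j) * A$$(i,j'))"
      by (rule sum.reindex_bij_witness[where i="pim k l" and j="pim k l"]) (use pimp in auto)
    also have "\<dots> = (transpose_mat A * A) $$ (j,j')"
      by (rule gram_col[symmetric]) (use dimA jj' in auto)
    finally show "(transpose_mat A * A) $$ (j,j') = (transpose_mat (A+E) * (A+E)) $$ (j,j')" by simp
  qed (use dimA dimAE in auto)
  have n0: "0 < n" "0 < m" using assms unfolding n_def m_def by auto
  have E00: "E $$ (0,0) \<noteq> 0"
    using Eij[OF n0] assms unfolding S_def R_def C_def
    by (cases "a = 0"; cases "b = 0"; cases "c = 0"; simp add: sign_pattern_def)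
  have neq: "A \<noteq> A + E"
  proof
    assume "A = A + E"
    then have "A $$ (0,0) = (A+E) $$ (0,0)" by simp
    also have "\<dots> = A $$ (0,0) + E $$ (0,0)" using n0 dimE by simp
    finally show False using E00 by simp
  qed
  have "gram_mates A (A+E)" unfolding gram_mates_def
    using zA zAE dimA dimAE rowg colg neq by simp
  then show ?thesis unfolding realizable_def E_def[symmetric] using dimA dimE zA by auto
qed

lemma nec:
  fixes a b c d e f g h k l :: nat
  assumes "k > 0" "l > 0" "a+b+c+d > 0"
    and rs1: "int a + b + e = c + d + f" and rs2: "int a + c + g = b + d + h"
    and re: "realizable (E_mat k l a b c d e f g h)"
  shows "even (int g - int h) \<and> even (int e - int f)"
proof -
  define E where "E = E_mat k l a b c d e f g h"
  have dimE: "dim_row E = k+k+l+l" "dim_col E = a+b+c+d+e+f+g+h" unfolding E_def by (simp_all add: E_idx)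
  from re obtain A where dimA0: "dim_row A = dim_row E" "dim_col A = dim_col E"
    and zA: "zero_one_mat A" and gm: "gram_mates A (A+E)"
    unfolding realizable_def E_def by blast
  have dimA: "dim_row A = k+k+l+l" "dim_col A = a+b+c+d+e+f+g+h" using dimA0 dimE by simp_all
  have Eij: "E $$ (i,j) = S (blk [k,k,l,l] i) (blk [a,b,c,d,e,f,g,h] j)"
    if "i < k+k+l+l" "j < a+b+c+d+e+f+g+h" for i j
    using that unfolding E_def by (simp add: E_idx)
  have zAE: "zero_one_mat (A+E)" and rowg: "A * transpose_mat A = (A+E) * transpose_mat (A+E)"
    and colg: "transpose_mat A * A = transpose_mat (A+E) * (A+E)"
    using gm unfolding gram_mates_def by auto
  have AEij: "(A+E) $$ (i,j) = A $$ (i,j) + S (blk [k,k,l,l] i) (blk [a,b,c,d,e,f,g,h] j)"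
    if "i < k+k+l+l" "j < a+b+c+d+e+f+g+h" for i j
    using that dimE by (simp add: Eij)
  have A01: "A $$ (i,j) \<in> {0,1}" if "i < k+k+l+l" "j < a+b+c+d+e+f+g+h" for i j
  proof -
    have "\<forall>i<k+k+l+l. \<forall>j<a+b+c+d+e+f+g+h. A $$ (i,j) \<in> {0,1}"
      using zA unfolding zero_one_mat_def dimA .
    then show ?thesis using that by blast
  qed
  have AE01: "A $$ (i,j) + S (blk [k,k,l,l] i) (blk [a,b,c,d,e,f,g,h] j) \<in> {0,1}"
    if "i < k+k+l+l" "j < a+b+c+d+e+f+g+h" for i j
  proof -
    have "\<forall>i<k+k+l+l. \<forall>j<a+b+c+d+e+f+g+h. (A+E) $$ (i,j) \<in> {0,1}"
      using zAE dimE unfolding zero_one_mat_def by simp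
    then show ?thesis using that AEij[OF that] by metis
  qed
  have Av1: "A $$ (i,j) = 0"
    if "i < k+k+l+l" "j < a+b+c+d+e+f+g+h" "S (blk [k,k,l,l] i) (blk [a,b,c,d,e,f,g,h] j) = 1" for i j
    using A01[OF that(1,2)] AE01[OF that(1,2)] unfolding that(3) by auto
  have Av2: "A $$ (i,j) = 1"
    if "i < k+k+l+l" "j < a+b+c+d+e+f+g+h" "S (blk [k,k,l,l] i) (blk [a,b,c,d,e,f,g,h] j) = -1" for i j
    using A01[OF that(1,2)] AE01[OF that(1,2)] unfolding that(3) by auto
  have RowG: "(\<Sum>j<a+b+c+d+e+f+g+h. A$$(i,j) * S (blk [k,k,l,l] i') (blk [a,b,c,d,e,f,g,h] j)
      + S (blk [k,k,l,l] i) (blk [a,b,c,d,e,f,g,h] j) * A$$(i',j)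
      + S (blk [k,k,l,l] i) (blk [a,b,c,d,e,f,g,h] j) * S (blk [k,k,l,l] i') (blk [a,b,c,d,e,f,g,h] j)) = 0"
    if "i < k+k+l+l" "i' < k+k+l+l" for i i'
  proof -
    have "(\<Sum>j<a+b+c+d+e+f+g+h. A$$(i,j) * A$$(i',j)) = (A * transpose_mat A) $$ (i,i')"
      by (rule gram_row[symmetric]) (use dimA that in auto)
    also have "\<dots> = ((A+E) * transpose_mat (A+E)) $$ (i,i')" using rowg by simp
    also have "\<dots> = (\<Sum>j<a+b+c+d+e+f+g+h. (A+E)$$(i,j) * (A+E)$$(i',j))"
      by (rule gram_row) (use dimA dimE that in auto)
    also have "\<dots> = (\<Sum>j<a+b+c+d+e+f+g+h. A$$(i,j) * A$$(i',j) + (A$$(i,j) * S (blk [k,k,l,l] i') (blk [a,b,c,d,e,f,g,h] j)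
      + S (blk [k,k,l,l] i) (blk [a,b,c,d,e,f,g,h] j) * A$$(i',j)
      + S (blk [k,k,l,l] i) (blk [a,b,c,d,e,f,g,h] j) * S (blk [k,k,l,l] i') (blk [a,b,c,d,e,f,g,h] j)))"
    proof (rule sum.cong)
      fix j assume "j \<in> {..<a+b+c+d+e+f+g+h}"
      then show "(A+E)$$(i,j) * (A+E)$$(i',j) = A$$(i,j) * A$$(i',j) + (A$$(i,j) * S (blk [k,k,l,l] i') (blk [a,b,c,d,e,f,g,h] j)
      + S (blk [k,k,l,l] i) (blk [a,b,c,d,e,f,g,h] j) * A$$(i',j)
      + S (blk [k,k,l,l] i) (blk [a,b,c,d,e,f,g,h] j) * S (blk [k,k,l,l] i') (blk [a,b,c,d,e,f,g,h] j))"
        using that by (simp only: AEij lessThan_iff ring_distribs add_ac mult_ac)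
    qed simp
    finally show ?thesis by (simp add: sum.distrib)
  qed
  have ColG: "(\<Sum>i<k+k+l+l. A$$(i,j) * S (blk [k,k,l,l] i) (blk [a,b,c,d,e,f,g,h] j')
      + S (blk [k,k,l,l] i) (blk [a,b,c,d,e,f,g,h] j) * A$$(i,j')
      + S (blk [k,k,l,l] i) (blk [a,b,c,d,e,f,g,h] j) * S (blk [k,k,l,l] i) (blk [a,b,c,d,e,f,g,h] j')) = 0"
    if "j < a+b+c+d+e+f+g+h" "j' < a+b+c+d+e+f+g+h" for j j'
  proof -
    have "(\<Sum>i<k+k+l+l. A$$(i,j) * A$$(i,j')) = (transpose_mat A * A) $$ (j,j')"
      by (rule gram_col[symmetric]) (use dimA that in auto)
    also have "\<dots> = (transpose_mat (A+E) * (A+E)) $$ (j,j')" using colg by simp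
    also have "\<dots> = (\<Sum>i<k+k+l+l. (A+E)$$(i,j) * (A+E)$$(i,j'))"
      by (rule gram_col) (use dimA dimE that in auto)
    also have "\<dots> = (\<Sum>i<k+k+l+l. A$$(i,j) * A$$(i,j') + (A$$(i,j) * S (blk [k,k,l,l] i) (blk [a,b,c,d,e,f,g,h] j')
      + S (blk [k,k,l,l] i) (blk [a,b,c,d,e,f,g,h] j) * A$$(i,j')
      + S (blk [k,k,l,l] i) (blk [a,b,c,d,e,f,g,h] j) * S (blk [k,k,l,l] i) (blk [a,b,c,d,e,f,g,h] j')))"
    proof (rule sum.cong)
      fix i assume "i \<in> {..<k+k+l+l}"
      then show "(A+E)$$(i,j) * (A+E)$$(i,j') = A$$(i,j) * A$$(i,j') + (A$$(i,j) * S (blk [k,k,l,l] i) (blk [a,b,c,d,e,f,g,h] j')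
      + S (blk [k,k,l,l] i) (blk [a,b,c,d,e,f,g,h] j) * A$$(i,j')
      + S (blk [k,k,l,l] i) (blk [a,b,c,d,e,f,g,h] j) * S (blk [k,k,l,l] i) (blk [a,b,c,d,e,f,g,h] j'))"
        using that by (simp only: AEij lessThan_iff ring_distribs add_ac mult_ac)
    qed simp
    finally show ?thesis by (simp add: sum.distrib)
  qed
  define X where "X = (\<Sum>j<g. A$$(0, a+b+c+d+e+f+j)) - (\<Sum>j<h. A$$(0, a+b+c+d+e+f+g+j))"
  define Y where "Y i' = (\<Sum>j<e. A$$(i', a+b+c+d+j)) - (\<Sum>j<f. A$$(i', a+b+c+d+e+j))" for i'
  have R3: "int a - d + Y (k+k+t) + X = 0" if "t < l" for t
    using RowG[of 0 "k+k+t"] that assms(1)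
    apply (simp add: sum_lessThan_add S_def sign_pattern_def)
    apply (simp add: S_def sign_pattern_def Av1 Av2 X_def Y_def sum_negf)
    done
  have R4: "int b - c + Y (k+k+l+t) - X = 0" if "t < l" for t
    using RowG[of 0 "k+k+l+t"] that assms(1)
    apply (simp add: sum_lessThan_add S_def sign_pattern_def)
    apply (simp add: S_def sign_pattern_def Av1 Av2 X_def Y_def sum_negf)
    done
  have Ce: "(\<Sum>i<l. A$$(k+k+i, a+b+c+d+t)) = (\<Sum>i<l. A$$(k+k+l+i, a+b+c+d+t))" if "t < e" for t
    using ColG[of 0 "a+b+c+d+t"] that assms(1,3)
    apply (cases "a = 0"; cases "b = 0"; cases "c = 0")
    apply (simp_all add: sum_lessThan_add S_def sign_pattern_def)
    apply (simp_all add: S_def sign_pattern_def Av1 Av2 sum_negf)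
    done
  have Cf: "(\<Sum>i<l. A$$(k+k+i, a+b+c+d+e+t)) = (\<Sum>i<l. A$$(k+k+l+i, a+b+c+d+e+t))" if "t < f" for t
    using ColG[of 0 "a+b+c+d+e+t"] that assms(1,3)
    apply (cases "a = 0"; cases "b = 0"; cases "c = 0")
    apply (simp_all add: sum_lessThan_add S_def sign_pattern_def)
    apply (simp_all add: S_def sign_pattern_def Av1 Av2 sum_negf)
    done
  have se: "(\<Sum>t<l. \<Sum>j<e. A$$(k+k+t, a+b+c+d+j)) = (\<Sum>t<l. \<Sum>j<e. A$$(k+k+l+t, a+b+c+d+j))"
    by (subst (1 2) sum.swap) (simp add: Ce)
  have sf: "(\<Sum>t<l. \<Sum>j<f. A$$(k+k+t, a+b+c+d+e+j)) = (\<Sum>t<l. \<Sum>j<f. A$$(k+k+l+t, a+b+c+d+e+j))"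
    by (subst (1 2) sum.swap) (simp add: Cf)
  have sumY: "(\<Sum>t<l. Y(k+k+t)) = (\<Sum>t<l. Y(k+k+l+t))"
    unfolding Y_def sum_subtractf using se sf by simp
  have L3: "(\<Sum>t<l. Y(k+k+t)) = (\<Sum>t<l. int d - a - X)"
    by (intro sum.cong refl) (smt (verit) R3 lessThan_iff)
  have L4: "(\<Sum>t<l. Y(k+k+l+t)) = (\<Sum>t<l. int c - b + X)"
    by (intro sum.cong refl) (smt (verit) R4 lessThan_iff)
  have "int l * (int d - a - X) = int l * (int c - b + X)"
    using sumY L3 L4 by simp
  then have key: "int d - a - X = int c - b + X" using assms(2) by simp
  have "int g - int h = 2 * X" using key rs2 unfolding of_nat_add by (smt (verit))
  moreover have "int e - int f = 2 * (int d - a - X)" using key rs1 unfolding of_nat_add by (smt (verit))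
  ultimately show ?thesis by simp
qed


theorem corollary4p16:
  fixes a b c d e f g h k l :: nat
  assumes "k > 0" and "l > 0"
    and "a + b + c + d > 0" and "e + f > 0" and "g + h > 0"
    and "\<forall>i < dim_row (E_mat k l a b c d e f g h).
           (\<Sum>j < dim_col (E_mat k l a b c d e f g h). E_mat k l a b c d e f g h $$ (i, j)) = 0"
    and "\<forall>j < dim_col (E_mat k l a b c d e f g h).
           (\<Sum>i < dim_row (E_mat k l a b c d e f g h). E_mat k l a b c d e f g h $$ (i, j)) = 0"
  shows "realizable (E_mat k l a b c d e f g h) \<longleftrightarrow>
           even (int g - int h) \<and> even (int e - int f)"
proof -
  have s0: "(\<Sum>j<a+b+c+d+e+f+g+h. E_mat k l a b c d e f g h $$ (0,j)) = 0"
  proof -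
    have "0 < dim_row (E_mat k l a b c d e f g h)" using assms(1) by (simp add: E_idx)
    with assms(6) have "(\<Sum>j < dim_col (E_mat k l a b c d e f g h). E_mat k l a b c d e f g h $$ (0, j)) = 0"
      by blast
    then show ?thesis by (simp only: E_idx(3))
  qed
  have "(\<Sum>j<a+b+c+d+e+f+g+h. E_mat k l a b c d e f g h $$ (0,j))
      = (\<Sum>j<a+b+c+d+e+f+g+h. S 0 (blk [a,b,c,d,e,f,g,h] j))"
    by (rule sum.cong) (use assms(1) in \<open>simp_all add: E_idx\<close>)
  then have "(\<Sum>j<a+b+c+d+e+f+g+h. S 0 (blk [a,b,c,d,e,f,g,h] j)) = 0" using s0 by simp
  then have rs1: "int a + b + e = c + d + f"
    by (simp add: sum_lessThan_add S_def sign_pattern_def)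
  have s2: "(\<Sum>j<a+b+c+d+e+f+g+h. E_mat k l a b c d e f g h $$ (k+k,j)) = 0"
  proof -
    have "k+k < dim_row (E_mat k l a b c d e f g h)" using assms(2) by (simp add: E_idx)
    with assms(6) have "(\<Sum>j < dim_col (E_mat k l a b c d e f g h). E_mat k l a b c d e f g h $$ (k+k, j)) = 0"
      by blast
    then show ?thesis by (simp only: E_idx(3))
  qed
  have "(\<Sum>j<a+b+c+d+e+f+g+h. E_mat k l a b c d e f g h $$ (k+k,j))
      = (\<Sum>j<a+b+c+d+e+f+g+h. S 2 (blk [a,b,c,d,e,f,g,h] j))"
    by (rule sum.cong) (use assms(2) in \<open>simp_all add: E_idx numeral_2_eq_2\<close>)
  then have "(\<Sum>j<a+b+c+d+e+f+g+h. S 2 (blk [a,b,c,d,e,f,g,h] j)) = 0" using s2 by simp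
  then have rs2: "int a + c + g = b + d + h"
    by (simp add: sum_lessThan_add S_def sign_pattern_def)
  show ?thesis
    using nec[OF assms(1-3) rs1 rs2] suff[OF assms(1-3) rs1 rs2] by blast
qed

end
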